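(* Let $W=\mathfrak{S}_n$, $\ast=\mathrm{id}$, $w\in I_\ast$, and let $(s_{i_1},\dots,s_{i_k},w)$ be a reduced sequence. (1) If $k\ge2$ and $|i_{k-1}-i_k|>1$, then $(s_{i_1},\dots,s_{i_{k-2}},s_{i_k},s_{i_{k-1}},w)$ is a reduced sequence and $s_{i_1}\ltimes\cdots\ltimes s_{i_{k-1}}\ltimes s_{i_k}\ltimes w=s_{i_1}\ltimes\cdots\ltimes s_{i_{k-2}}\ltimes s_{i_k}\ltimes s_{i_{k-1}}\ltimes w$. (2) If $k\ge3$ and $i_{k-2}=i_k=i_{k-1}\pm1$, then $(s_{i_1},\dots,s_{i_{k-3}},s_{i_{k-1}},s_{i_k},s_{i_{k-1}},w)$ is a reduced sequence and $s_{i_1}\ltimes\cdots\ltimes s_{i_{k-3}}\ltimes s_{i_{k-2}}\ltimes s_{i_{k-1}}\ltimes s_{i_k}\ltimes w=s_{i_1}\ltimes\cdots\ltimes s_{i_{k-3}}\ltimes s_{i_{k-1}}\ltimes s_{i_k}\ltimes s_{i_{k-1}}\ltimes w$. (3) If $w=s_{i_k\pm1}$, then $(s_{i_1},\dots,s_{i_{k-1}},s_{i_k\pm1},s_{i_k})$ is a reduced sequence and $s_{i_1}\ltimes\cdots\ltimes s_{i_{k-1}}\ltimes s_{i_k}\ltimes s_{i_k\pm1}=s_{i_1}\ltimes\cdots\ltimes s_{i_{k-1}}\ltimes s_{i_k\pm1}\ltimes s_{i_k}$.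
   Context: $\mathfrak{S}_n$ with $s_i=(i,i+1)$, $S=\{s_1,\dots,s_{n-1}\}$; $I_\ast=\{w\in\mathfrak{S}_n:w^2=1\}$. For $s\in S$, $w\in I_\ast$: $s\ltimes w=sw$ if $sw=ws$, $s\ltimes w=sws$ otherwise (so $s\ltimes1=s$); iterated from the right: $s_{i_1}\ltimes\cdots\ltimes s_{i_k}\ltimes w=s_{i_1}\ltimes(\cdots(s_{i_k}\ltimes w)\cdots)$, and an expression ending in $s_{i_k}$ means ending in $s_{i_k}\ltimes1$. $\rho(w)$ is the minimal $k$ such that $w=s_{i_1}\ltimes\cdots\ltimes s_{i_k}\ltimes1$ for some $s_{i_j}\in S$. A sequence $(s_{i_1},\dots,s_{i_k},w)$ with $w\in I_\ast$ is reduced if $\rho(s_{i_1}\ltimes\cdots\ltimes s_{i_k}\ltimes w)=\rho(w)+k$. *)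

theory Defs
  imports "HOL-Combinatorics.Combinatorics"
begin

text \<open>The symmetric group on {1..n}: permutations are functions nat => nat permuting {1..n};
  the product sw is composition s o w.\<close>

definition Sym :: "nat \<Rightarrow> (nat \<Rightarrow> nat) set" where
  "Sym n = {w. w permutes {1..n}}"

definition Invol :: "nat \<Rightarrow> (nat \<Rightarrow> nat) set" where
  "Invol n = {w \<in> Sym n. w \<circ> w = id}"

definition sgen :: "nat \<Rightarrow> nat \<Rightarrow> nat" where
  "sgen i = transpose i (Suc i)"

definition gens :: "nat \<Rightarrow> nat set" where
  "gens n = {1..<n}"

definition tact :: "nat \<Rightarrow> (nat \<Rightarrow> nat) \<Rightarrow> (nat \<Rightarrow> nat)" where
  "tact i w = (if sgen i \<circ> w = w \<circ> sgen i then sgen i \<circ> w else sgen i \<circ> w \<circ> sgen i)"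

definition tacts :: "nat list \<Rightarrow> (nat \<Rightarrow> nat) \<Rightarrow> (nat \<Rightarrow> nat)" where
  "tacts is w = foldr tact is w"

definition rho :: "nat \<Rightarrow> (nat \<Rightarrow> nat) \<Rightarrow> nat" where
  "rho n w = (LEAST k. \<exists>is. length is = k \<and> set is \<subseteq> gens n \<and> tacts is id = w)"

definition reduced :: "nat \<Rightarrow> nat list \<Rightarrow> (nat \<Rightarrow> nat) \<Rightarrow> bool" where
  "reduced n is w \<longleftrightarrow> w \<in> Invol n \<and> set is \<subseteq> gens n \<and>
     rho n (tacts is w) = rho n w + length is"

end

theory Submission
  imports Defs
begin


lemma sgen_apply: "sgen i p = (if p = i then Suc i else if p = Suc i then i else p)"
  by (simp add: sgen_def transpose_def)

lemma sgen_sgen[simp]: "sgen i (sgen i p) = p"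
  by (simp add: sgen_apply)

lemma sgen_comp_sgen[simp]: "sgen i \<circ> sgen i = id"
  by (rule ext) simp

lemma tact_char:
  assumes "\<And>p. x (x p) = p"
  shows "tact i x = (if (x i = i \<and> x (Suc i) = Suc i) \<or> x i = Suc i then sgen i \<circ> x else sgen i \<circ> x \<circ> sgen i)"
proof -
  have inj: "inj x" by (metis assms injI)
  have "(sgen i \<circ> x = x \<circ> sgen i) \<longleftrightarrow> ((x i = i \<and> x (Suc i) = Suc i) \<or> x i = Suc i)"
  proof
    assume c: "sgen i \<circ> x = x \<circ> sgen i"
    have 1: "sgen i (x i) = x (Suc i)" using fun_cong[OF c, of i] by (simp add: sgen_apply)
    show "(x i = i \<and> x (Suc i) = Suc i) \<or> x i = Suc i"
      using 1 inj assms[of i] by (auto simp: sgen_apply inj_eq split: if_splits)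
  next
    assume h: "(x i = i \<and> x (Suc i) = Suc i) \<or> x i = Suc i"
    then have h2: "(x i = i \<and> x (Suc i) = Suc i) \<or> (x i = Suc i \<and> x (Suc i) = i)" using assms[of i] by auto
    show "sgen i \<circ> x = x \<circ> sgen i"
    proof (rule ext)
      fix p show "(sgen i \<circ> x) p = (x \<circ> sgen i) p"
        using h2 assms[of p] by (auto simp: sgen_apply)
    qed
  qed
  then show ?thesis by (simp add: tact_def)
qed

lemma tact_invol:
  assumes "\<And>p. x (x p) = p"
  shows "tact i x (tact i x p) = p"
proof (cases "sgen i \<circ> x = x \<circ> sgen i")
  case True
  then have "x (sgen i q) = sgen i (x q)" for q by (metis comp_apply)
  then show ?thesis using True assms by (simp add: tact_def)
next
  case False
  then show ?thesis using assms by (simp add: tact_def)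
qed

lemma tact_pt:
  assumes "\<And>p. x (x p) = p"
  shows "tact i x p = (if (x i = i \<and> x (Suc i) = Suc i) \<or> x i = Suc i then sgen i (x p) else sgen i (x (sgen i p)))"
  using tact_char[OF assms] by simp

definition cnd :: "nat \<Rightarrow> (nat \<Rightarrow> nat) \<Rightarrow> bool" where
  "cnd i x = ((x i = i \<and> x (Suc i) = Suc i) \<or> x i = Suc i)"

definition E :: "nat \<Rightarrow> (nat \<Rightarrow> nat) \<Rightarrow> nat \<Rightarrow> nat" where
  "E i x = (if cnd i x then id else sgen i)"

lemma tact_comp:
  assumes "\<And>p. x (x p) = p"
  shows "tact i x = sgen i \<circ> x \<circ> E i x"
  using tact_char[OF assms] by (auto simp: E_def cnd_def)

lemma braid_fun: "b = Suc a \<or> a = Suc b \<Longrightarrow> sgen a \<circ> sgen b \<circ> sgen a = sgen b \<circ> sgen a \<circ> sgen b"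
  by (rule ext) (auto simp: sgen_apply)

lemma braid_core:
  assumes inv: "\<And>p. x (x p) = p" and b: "b = Suc a"
    and a1: "x a < x (Suc a)"
    and a2: "tact a x b < tact a x (Suc b)"
    and a3: "tact b (tact a x) a < tact b (tact a x) (Suc a)"
  shows "tact a (tact b (tact a x)) = tact b (tact a (tact b x))"
proof -
  define y1 where "y1 = tact a x"
  define y2 where "y2 = tact b y1"
  define z1 where "z1 = tact b x"
  define z2 where "z2 = tact a z1"
  have iy1: "\<And>p. y1 (y1 p) = p" unfolding y1_def by (rule tact_invol[OF inv])
  have iy2: "\<And>p. y2 (y2 p) = p" unfolding y2_def by (rule tact_invol[OF iy1])
  have iz1: "\<And>p. z1 (z1 p) = p" unfolding z1_def by (rule tact_invol[OF inv])
  have iz2: "\<And>p. z2 (z2 p) = p" unfolding z2_def by (rule tact_invol[OF iz1])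
  have ey1: "y1 = sgen a \<circ> x \<circ> E a x" unfolding y1_def by (rule tact_comp[OF inv])
  have ez1: "z1 = sgen b \<circ> x \<circ> E b x" unfolding z1_def by (rule tact_comp[OF inv])
  have ey2: "y2 = sgen b \<circ> y1 \<circ> E b y1" unfolding y2_def by (rule tact_comp[OF iy1])
  have ez2: "z2 = sgen a \<circ> z1 \<circ> E a z1" unfolding z2_def by (rule tact_comp[OF iz1])
  have ey3: "tact a y2 = sgen a \<circ> y2 \<circ> E a y2" by (rule tact_comp[OF iy2])
  have ez3: "tact b z2 = sgen b \<circ> z2 \<circ> E b z2" by (rule tact_comp[OF iz2])
  have A2: "y1 b < y1 (Suc b)" using a2 y1_def by simp
  have A3: "y2 a < y2 (Suc a)" using a3 y1_def y2_def by simp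
  have vy1: "\<And>q. y1 q = sgen a (x (E a x q))" using ey1 by simp
  have vz1: "\<And>q. z1 q = sgen b (x (E b x q))" using ez1 by simp
  have vy2: "\<And>q. y2 q = sgen b (y1 (E b y1 q))" using ey2 by simp
  have vz2: "\<And>q. z2 q = sgen a (z1 (E a z1 q))" using ez2 by simp
  have Eap: "\<And>i f q. E i f q = (if cnd i f then q else sgen i q)" by (simp add: E_def)
  have key: "E a x \<circ> E b y1 \<circ> E a y2 = E b x \<circ> E a z1 \<circ> E b z2"
  proof (rule ext)
    fix q
    have cx: "\<And>q. x q = a \<or> x q = Suc a \<or> x q = Suc (Suc a) \<or> (x q \<noteq> a \<and> x q \<noteq> Suc a \<and> x q \<noteq> Suc (Suc a))" by auto
    show "(E a x \<circ> E b y1 \<circ> E a y2) q = (E b x \<circ> E a z1 \<circ> E b z2) q"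
      using A2 A3 a1 inv inv[of a] inv[of "Suc a"] inv[of "Suc (Suc a)"] cx[of a] cx[of "Suc a"] cx[of "Suc (Suc a)"]
      apply -
      apply (elim disjE conjE)
      apply (simp_all add: Eap cnd_def sgen_apply vy1 vy2 vz1 vz2 b)
      done
  qed
  have L: "tact a y2 = (sgen a \<circ> sgen b \<circ> sgen a) \<circ> x \<circ> (E a x \<circ> E b y1 \<circ> E a y2)"
    by (rule ext) (simp add: ey3 vy2 vy1)
  have R: "tact b z2 = (sgen b \<circ> sgen a \<circ> sgen b) \<circ> x \<circ> (E b x \<circ> E a z1 \<circ> E b z2)"
    by (rule ext) (simp add: ez3 vz2 vz1)
  show ?thesis
    unfolding y1_def[symmetric] y2_def[symmetric] z1_def[symmetric] z2_def[symmetric] L R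
    using braid_fun[of b a] key b by simp
qed


definition invset :: "nat \<Rightarrow> (nat \<Rightarrow> nat) \<Rightarrow> (nat \<times> nat) set" where
  "invset n x = {(p,q). p \<in> {1..n} \<and> q \<in> {1..n} \<and> p < q \<and> x q < x p}"
definition excset :: "nat \<Rightarrow> (nat \<Rightarrow> nat) \<Rightarrow> nat set" where
  "excset n x = {p \<in> {1..n}. p < x p}"
definition L2 :: "nat \<Rightarrow> (nat \<Rightarrow> nat) \<Rightarrow> nat" where
  "L2 n x = card (invset n x) + card (excset n x)"

lemma fin_invset: "finite (invset n x)"
  by (rule finite_subset[of _ "{1..n} \<times> {1..n}"]) (auto simp: invset_def)
lemma fin_excset: "finite (excset n x)"
  by (simp add: excset_def)

lemma sgen_inj: "sgen i a = sgen i b \<Longrightarrow> a = b" by (metis sgen_sgen)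

lemma sgen_lt: "\<alpha> \<noteq> \<beta> \<Longrightarrow> (sgen i \<alpha> < sgen i \<beta>) = ((\<alpha> < \<beta> \<and> \<not> (\<alpha> = i \<and> \<beta> = Suc i)) \<or> (\<alpha> = Suc i \<and> \<beta> = i))"
  by (auto simp: sgen_apply)

lemma invB:
  assumes inj: "inj_on x {1..n}" and u: "u \<in> {1..n}" and v: "v \<in> {1..n}" and uv: "u < v"
    and xu: "x u = i" and xv: "x v = Suc i"
  shows "card (invset n (sgen i \<circ> x)) = card (invset n x) + 1"
proof -
  have "invset n (sgen i \<circ> x) = insert (u,v) (invset n x)"
  proof -
    have "\<And>p q. p \<in> {1..n} \<Longrightarrow> q \<in> {1..n} \<Longrightarrow> p < q \<Longrightarrow>
       (sgen i (x q) < sgen i (x p)) = (x q < x p \<or> (p = u \<and> q = v))"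
    proof -
      fix p q assume p: "p \<in> {1..n}" and q: "q \<in> {1..n}" and pq: "p < q"
      have ne: "x q \<noteq> x p" using inj p q pq by (metis inj_on_eq_iff less_irrefl)
      have e1: "(x q = i \<and> x p = Suc i) = (q = u \<and> p = v)" using inj p q u v xu xv by (metis inj_on_eq_iff n_not_Suc_n)
      have e2: "(x q = Suc i \<and> x p = i) = (q = v \<and> p = u)" using inj p q u v xu xv by (metis inj_on_eq_iff n_not_Suc_n)
      show "?thesis p q" using sgen_lt[OF ne, of i] e1 e2 pq uv by auto
    qed
    then show ?thesis using u v uv by (auto simp: invset_def)
  qed
  moreover have "(u,v) \<notin> invset n x" using xu xv by (auto simp: invset_def)
  ultimately show ?thesis using fin_invset by simp
qed

lemma invA:
  assumes i: "1 \<le> i" "Suc i \<le> n" and asc: "x i < x (Suc i)"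
  shows "card (invset n (x \<circ> sgen i)) = card (invset n x) + 1"
proof -
  define \<phi> where "\<phi> = (\<lambda>(p,q). (sgen i p, sgen i q))"
  have inj: "inj_on \<phi> A" for A by (rule inj_onI) (auto simp: \<phi>_def split: prod.splits dest: sgen_inj)
  have box: "\<And>p. (sgen i p \<in> {1..n}) = (p \<in> {1..n})" using i by (auto simp: sgen_apply)
  have lt: "\<And>p q. p < q \<Longrightarrow> \<not> (p = i \<and> q = Suc i) \<Longrightarrow> sgen i p < sgen i q"
    by (auto simp: sgen_apply)
  have "invset n (x \<circ> sgen i) = insert (i, Suc i) (\<phi> ` invset n x)"
  proof (rule set_eqI, rule iffI)
    fix z assume z: "z \<in> invset n (x \<circ> sgen i)"
    obtain p q where zz: "z = (p,q)" by force
    show "z \<in> insert (i, Suc i) (\<phi> ` invset n x)"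
    proof (cases "p = i \<and> q = Suc i")
      case True then show ?thesis using zz by simp
    next
      case False
      have "(sgen i p, sgen i q) \<in> invset n x" using z zz lt[OF _ False] box by (auto simp: invset_def)
      moreover have "z = \<phi> (sgen i p, sgen i q)" using zz by (simp add: \<phi>_def)
      ultimately show ?thesis by blast
    qed
  next
    fix z assume z: "z \<in> insert (i, Suc i) (\<phi> ` invset n x)"
    show "z \<in> invset n (x \<circ> sgen i)"
    proof (cases "z = (i, Suc i)")
      case True then show ?thesis using i asc by (auto simp: invset_def sgen_apply)
    next
      case False
      then obtain p q where pq: "(p,q) \<in> invset n x" and zz: "z = (sgen i p, sgen i q)"
        using z by (auto simp: \<phi>_def)
      have "\<not> (p = i \<and> q = Suc i)" using pq asc by (auto simp: invset_def)
      then show ?thesis using pq zz lt box by (auto simp: invset_def)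
    qed
  qed
  moreover have "(i, Suc i) \<notin> \<phi> ` invset n x"
    by (auto simp: \<phi>_def invset_def sgen_apply split: if_splits)
  ultimately show ?thesis using fin_invset card_image[OF inj] by simp
qed


lemma Invol_D:
  assumes "x \<in> Invol n"
  shows "x permutes {1..n}" "\<And>p. x (x p) = p" "inj_on x {1..n}" "\<And>p. p \<in> {1..n} \<Longrightarrow> x p \<in> {1..n}"
proof -
  show xp: "x permutes {1..n}" using assms by (simp add: Invol_def Sym_def)
  have xx: "x \<circ> x = id" using assms by (simp add: Invol_def)
  show "\<And>p. x (x p) = p" using fun_cong[OF xx] by simp
  show "inj_on x {1..n}" using xp permutes_inj_on by blast
  show "\<And>p. p \<in> {1..n} \<Longrightarrow> x p \<in> {1..n}" by (rule permutes_in_image[OF xp, THEN iffD2])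
qed

lemma sgen_permutes: "i \<in> gens n \<Longrightarrow> sgen i permutes {1..n}"
  unfolding sgen_def gens_def by (rule permutes_swap_id) auto

lemma tact_Invol:
  assumes x: "x \<in> Invol n" and i: "i \<in> gens n"
  shows "tact i x \<in> Invol n"
proof -
  have xp: "x permutes {1..n}" by (rule Invol_D(1)[OF x])
  have sp: "sgen i permutes {1..n}" by (rule sgen_permutes[OF i])
  have "tact i x permutes {1..n}"
    unfolding tact_def using permutes_compose[OF xp sp] permutes_compose[OF sp permutes_compose[OF xp sp]]
       permutes_compose[OF sp xp] by (simp add: comp_assoc)
  moreover have "tact i x \<circ> tact i x = id"
    by (rule ext) (simp add: tact_invol[OF Invol_D(2)[OF x]])
  ultimately show ?thesis by (simp add: Invol_def Sym_def)
qed

lemma excE1: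
  assumes inj: "inj_on x {1..n}" and i: "i \<in> gens n" and f: "x i = i" "x (Suc i) = Suc i"
  shows "card (excset n (sgen i \<circ> x)) = card (excset n x) + 1"
proof -
  have ib: "i \<in> {1..n}" "Suc i \<in> {1..n}" using i by (auto simp: gens_def)
  have h: "x p \<noteq> i \<and> x p \<noteq> Suc i" if p: "p \<in> {1..n}" "p \<noteq> i" "p \<noteq> Suc i" for p
  proof -
    have "x p \<noteq> x i" using inj_on_eq_iff[OF inj p(1) ib(1)] p(2) by blast
    moreover have "x p \<noteq> x (Suc i)" using inj_on_eq_iff[OF inj p(1) ib(2)] p(3) by blast
    ultimately show ?thesis using f by simp
  qed
  have hh: "(p < sgen i (x p)) = (p = i \<or> p < x p)" if p: "p \<in> {1..n}" for p
  proof (cases "p = i \<or> p = Suc i")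
    case True then show ?thesis using f by (auto simp: sgen_apply)
  next
    case False then have "x p \<noteq> i \<and> x p \<noteq> Suc i" using h p by blast
    then show ?thesis using False by (simp add: sgen_apply)
  qed
  have "excset n (sgen i \<circ> x) = insert i (excset n x)"
  proof (rule set_eqI)
    fix p show "(p \<in> excset n (sgen i \<circ> x)) = (p \<in> insert i (excset n x))"
      using hh[of p] ib unfolding excset_def by (cases "p \<in> {1..n}") auto
  qed
  moreover have "i \<notin> excset n x" using f by (simp add: excset_def)
  ultimately show ?thesis using fin_excset by simp
qed

lemma sgen_image_iff: "(p \<in> sgen i ` A) = (sgen i p \<in> A)"
proof
  assume "p \<in> sgen i ` A" then obtain q where "q \<in> A" "p = sgen i q" by blast
  then show "sgen i p \<in> A" by simp
next
  assume "sgen i p \<in> A" then have "sgen i (sgen i p) \<in> sgen i ` A" by (rule imageI)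
  then show "p \<in> sgen i ` A" by simp
qed

lemma excE2:
  assumes inv: "\<And>p. x (x p) = p" and i: "i \<in> gens n" and asc: "x i < x (Suc i)"
    and nf: "\<not> (x i = i \<and> x (Suc i) = Suc i)"
  shows "card (excset n (sgen i \<circ> x \<circ> sgen i)) = card (excset n x)"
proof -
  have box: "\<And>p. (sgen i p \<in> {1..n}) = (p \<in> {1..n})" using i by (auto simp: sgen_apply gens_def)
  have key: "\<And>p. (sgen i p < sgen i (x p)) = (p < x p)"
  proof -
    fix p
    show "(sgen i p < sgen i (x p)) = (p < x p)"
    proof (cases "x p = p")
      case True then show ?thesis by simp
    next
      case False
      have "\<not> (p = i \<and> x p = Suc i)" using asc inv[of i] by auto
      moreover have "\<not> (p = Suc i \<and> x p = i)" using asc inv[of "Suc i"] by auto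
      ultimately show ?thesis using sgen_lt[of p "x p" i] False by auto
    qed
  qed
  have "excset n (sgen i \<circ> x \<circ> sgen i) = sgen i ` excset n x"
  proof (rule set_eqI)
    fix p
    have "(p \<in> sgen i ` excset n x) = (sgen i p \<in> excset n x)"
      by (rule sgen_image_iff)
    moreover have m1: "(p \<in> excset n (sgen i \<circ> x \<circ> sgen i)) = (p \<in> {1..n} \<and> p < sgen i (x (sgen i p)))"
      by (simp add: excset_def)
    moreover have m2: "(sgen i p \<in> excset n x) = (sgen i p \<in> {1..n} \<and> sgen i p < x (sgen i p))"
      by (simp add: excset_def)
    moreover have k: "(p < sgen i (x (sgen i p))) = (sgen i p < x (sgen i p))"
      using key[of "sgen i p"] by simp
    ultimately show "(p \<in> excset n (sgen i \<circ> x \<circ> sgen i)) = (p \<in> sgen i ` excset n x)"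
      using box[of p] by blast
  qed
  moreover have "inj_on (sgen i) A" for A by (rule inj_onI) (rule sgen_inj)
  ultimately show ?thesis by (simp add: card_image)
qed

lemma L2_asc:
  assumes x: "x \<in> Invol n" and i: "i \<in> gens n" and asc: "x i < x (Suc i)"
  shows "L2 n (tact i x) = L2 n x + 2"
proof -
  note inv = Invol_D(2)[OF x] and inj = Invol_D(3)[OF x] and bx = Invol_D(4)[OF x]
  have ib: "i \<in> {1..n}" "Suc i \<in> {1..n}" using i by (auto simp: gens_def)
  show ?thesis
  proof (cases "x i = i \<and> x (Suc i) = Suc i")
    case True
    then have t: "tact i x = sgen i \<circ> x" by (simp add: tact_char[OF inv])
    have c1: "card (invset n (sgen i \<circ> x)) = card (invset n x) + 1"
      by (rule invB[OF inj ib(1) ib(2)]) (simp_all add: True)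
    have c2: "card (excset n (sgen i \<circ> x)) = card (excset n x) + 1"
      using True by (intro excE1[OF inj i]) simp_all
    show ?thesis unfolding t L2_def using c1 c2 by simp
  next
    case False
    have nsw: "x i \<noteq> Suc i" using asc inv[of i] by auto
    have cc: "\<not> ((x i = i \<and> x (Suc i) = Suc i) \<or> x i = Suc i)" using nsw False by blast
    have t: "tact i x = sgen i \<circ> (x \<circ> sgen i)"
      unfolding tact_char[OF inv] if_not_P[OF cc] by (simp add: comp_assoc)
    have c1: "card (invset n (x \<circ> sgen i)) = card (invset n x) + 1"
      using invA[of i n x] i asc by (auto simp: gens_def)
    have bs: "\<And>p. p \<in> {1..n} \<Longrightarrow> sgen i p \<in> {1..n}" using ib by (auto simp: sgen_apply)
    have injs: "inj_on (sgen i) {1..n}" by (rule inj_onI) (rule sgen_inj)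
    have "sgen i ` {1..n} \<subseteq> {1..n}" using bs by blast
    then have injy: "inj_on (x \<circ> sgen i) {1..n}"
      by (intro comp_inj_on[OF injs] inj_on_subset[OF inj])
    have lt: "sgen i (x i) < sgen i (x (Suc i))"
    proof -
      have "x i \<noteq> x (Suc i)" using asc by simp
      then have e: "(sgen i (x i) < sgen i (x (Suc i))) = ((x i < x (Suc i) \<and> \<not> (x i = i \<and> x (Suc i) = Suc i)) \<or> (x i = Suc i \<and> x (Suc i) = i))"
        by (rule sgen_lt)
      show ?thesis unfolding e using asc False by blast
    qed
    have c2: "card (invset n (sgen i \<circ> (x \<circ> sgen i))) = card (invset n (x \<circ> sgen i)) + 1"
      by (rule invB[OF injy bs[OF bx[OF ib(1)]] bs[OF bx[OF ib(2)]] lt]) (simp_all add: inv)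
    have c3: "card (excset n (sgen i \<circ> x \<circ> sgen i)) = card (excset n x)"
      by (rule excE2[OF inv i asc False])
    show ?thesis unfolding t L2_def using c1 c2 c3 by (simp add: comp_assoc)
  qed
qed

lemma tact_tact: "tact i (tact i x) = x"
proof (cases "sgen i \<circ> x = x \<circ> sgen i")
  case True
  have c2: "sgen i \<circ> (sgen i \<circ> x) = (sgen i \<circ> x) \<circ> sgen i"
    using True by (metis comp_assoc comp_id id_comp sgen_comp_sgen)
  have t1: "tact i x = sgen i \<circ> x" unfolding tact_def using True by simp
  have t2: "tact i (sgen i \<circ> x) = sgen i \<circ> (sgen i \<circ> x)" unfolding tact_def using c2 by simp
  show ?thesis unfolding t1 t2 by (simp add: comp_assoc[symmetric])
next
  case False
  have c2: "\<not> (sgen i \<circ> (sgen i \<circ> x \<circ> sgen i) = (sgen i \<circ> x \<circ> sgen i) \<circ> sgen i)"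
    using False by (metis comp_assoc comp_id id_comp sgen_comp_sgen)
  have t1: "tact i x = sgen i \<circ> x \<circ> sgen i" unfolding tact_def using False by simp
  have t2: "tact i (sgen i \<circ> x \<circ> sgen i) = sgen i \<circ> (sgen i \<circ> x \<circ> sgen i) \<circ> sgen i"
    unfolding tact_def using c2 by (simp only: if_False)
  have "sgen i \<circ> (sgen i \<circ> x \<circ> sgen i) \<circ> sgen i = (sgen i \<circ> sgen i) \<circ> x \<circ> (sgen i \<circ> sgen i)"
    by (simp only: comp_assoc)
  then show ?thesis unfolding t1 t2 by simp
qed

lemma desc_flip:
  assumes x: "x \<in> Invol n" and d: "x (Suc i) < x i"
  shows "tact i x i < tact i x (Suc i)" "tact i (tact i x) = x"
proof -
  note inv = Invol_D(2)[OF x]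
  show "tact i x i < tact i x (Suc i)"
    using d inv[of i] inv[of "Suc i"] by (auto simp: tact_pt[OF inv] sgen_apply)
  show "tact i (tact i x) = x" by (rule tact_tact)
qed


lemma tacts_Cons: "tacts (i # ks) w = tact i (tacts ks w)" by (simp add: tacts_def)
lemma tacts_Nil: "tacts [] w = w" by (simp add: tacts_def)
lemma tacts_append: "tacts (xs @ ys) w = tacts xs (tacts ys w)" by (simp add: tacts_def)

lemma gens_box: "i \<in> gens n \<Longrightarrow> i \<in> {1..n} \<and> Suc i \<in> {1..n}" by (auto simp: gens_def)

lemma asc_or_desc:
  assumes x: "x \<in> Invol n" and i: "i \<in> gens n"
  shows "x i < x (Suc i) \<or> x (Suc i) < x i"
proof -
  have "x i \<noteq> x (Suc i)" using inj_on_eq_iff[OF Invol_D(3)[OF x]] gens_box[OF i] by (metis n_not_Suc_n)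
  then show ?thesis by arith
qed

lemma L2_desc:
  assumes x: "x \<in> Invol n" and i: "i \<in> gens n" and d: "x (Suc i) < x i"
  shows "L2 n x = L2 n (tact i x) + 2"
proof -
  have y: "tact i x \<in> Invol n" by (rule tact_Invol[OF x i])
  have "L2 n (tact i (tact i x)) = L2 n (tact i x) + 2"
    by (rule L2_asc[OF y i desc_flip(1)[OF x d]])
  then show ?thesis by (simp add: tact_tact)
qed

lemma L2_id: "L2 n id = 0"
proof -
  have "invset n id = {}" "excset n id = {}" by (auto simp: invset_def excset_def)
  then show ?thesis by (simp add: L2_def)
qed

lemma id_Invol: "id \<in> Invol n"
  by (simp add: Invol_def Sym_def permutes_id)

lemma exists_desc:
  assumes x: "x \<in> Invol n" and ne: "x \<noteq> id"
  shows "\<exists>i \<in> gens n. x (Suc i) < x i"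
proof (rule ccontr)
  assume "\<not> ?thesis"
  then have up: "x i < x (Suc i)" if "i \<in> gens n" for i
    using asc_or_desc[OF x that] that by blast
  note bx = Invol_D(4)[OF x]
  have lo: "k \<le> n \<longrightarrow> 1 \<le> k \<longrightarrow> k \<le> x k" for k
  proof (induction k)
    case 0 then show ?case by simp
  next
    case (Suc k)
    show ?case
    proof (cases "k = 0")
      case True then show ?thesis using bx[of 1] by auto
    next
      case False
      show ?thesis
      proof (intro impI)
        assume "Suc k \<le> n"
        then have "k \<in> gens n" using False by (simp add: gens_def)
        then show "Suc k \<le> x (Suc k)" using up[of k] Suc.IH \<open>Suc k \<le> n\<close> False by simp
      qed
    qed
  qed
  have hi: "d < n \<longrightarrow> x (n - d) \<le> n - d" for d
  proof (induction d)
    case 0 then show ?case using bx[of n] by auto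
  next
    case (Suc d)
    show ?case
    proof
      assume dn: "Suc d < n"
      have g: "n - Suc d \<in> gens n" using dn by (simp add: gens_def)
      have e: "Suc (n - Suc d) = n - d" using dn by simp
      have "x (n - Suc d) < x (n - d)" using up[OF g] e by simp
      then show "x (n - Suc d) \<le> n - Suc d" using Suc.IH dn e by simp
    qed
  qed
  have "x k = k" for k
  proof (cases "k \<in> {1..n}")
    case True
    then have "x (n - (n - k)) \<le> n - (n - k)" using hi[of "n - k"] by simp
    then have "x k \<le> k" using True by simp
    then show ?thesis using lo[of k] True by simp
  next
    case False then show ?thesis using permutes_not_in[OF Invol_D(1)[OF x]] by blast
  qed
  then have "x = id" by (simp add: fun_eq_iff)
  then show False using ne by simp
qed

lemma reach:
  assumes "x \<in> Invol n"
  shows "\<exists>ks. set ks \<subseteq> gens n \<and> tacts ks id = x \<and> 2 * length ks = L2 n x"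
  using assms
proof (induction "L2 n x" arbitrary: x rule: less_induct)
  case less
  show ?case
  proof (cases "x = id")
    case True then show ?thesis by (intro exI[of _ "[]"]) (simp add: tacts_Nil L2_id)
  next
    case False
    then obtain i where i: "i \<in> gens n" and d: "x (Suc i) < x i" using exists_desc[OF less.prems] by blast
    define y where "y = tact i x"
    have y: "y \<in> Invol n" unfolding y_def by (rule tact_Invol[OF less.prems i])
    have L: "L2 n x = L2 n y + 2" unfolding y_def by (rule L2_desc[OF less.prems i d])
    obtain ks where ks: "set ks \<subseteq> gens n" "tacts ks id = y" "2 * length ks = L2 n y"
      using less.hyps[of y] y L by auto
    have "tacts (i # ks) id = x" using ks(2) by (simp add: tacts_Cons y_def tact_tact)
    then show ?thesis using ks i L by (intro exI[of _ "i # ks"]) simp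
  qed
qed

lemma tacts_bound:
  assumes "set ks \<subseteq> gens n" "x \<in> Invol n"
  shows "tacts ks x \<in> Invol n \<and> L2 n (tacts ks x) \<le> L2 n x + 2 * length ks"
  using assms
proof (induction "ks")
  case Nil then show ?case by (simp add: tacts_Nil)
next
  case (Cons i ks)
  then have ih: "tacts ks x \<in> Invol n" "L2 n (tacts ks x) \<le> L2 n x + 2 * length ks" and i: "i \<in> gens n" by auto
  have "L2 n (tact i (tacts ks x)) \<le> L2 n (tacts ks x) + 2"
    using asc_or_desc[OF ih(1) i] L2_asc[OF ih(1) i] L2_desc[OF ih(1) i] by fastforce
  then show ?case using ih tact_Invol[OF ih(1) i] by (simp add: tacts_Cons)
qed

lemma rho_L2:
  assumes x: "x \<in> Invol n"
  shows "2 * rho n x = L2 n x"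
proof -
  obtain ks0 where ks0: "set ks0 \<subseteq> gens n" "tacts ks0 id = x" "2 * length ks0 = L2 n x"
    using reach[OF x] by blast
  have "rho n x = length ks0"
    unfolding rho_def
  proof (rule Least_equality)
    show "\<exists>ks. length ks = length ks0 \<and> set ks \<subseteq> gens n \<and> tacts ks id = x" using ks0 by blast
  next
    fix m assume "\<exists>ks. length ks = m \<and> set ks \<subseteq> gens n \<and> tacts ks id = x"
    then obtain js where js: "length js = m" "set js \<subseteq> gens n" "tacts js id = x" by blast
    have "L2 n x \<le> L2 n id + 2 * length js" using tacts_bound[OF js(2) id_Invol] js(3) by simp
    then show "length ks0 \<le> m" using ks0(3) js(1) L2_id by simp
  qed
  then show ?thesis using ks0(3) by simp
qed

lemma rho_asc:
  assumes x: "x \<in> Invol n" and i: "i \<in> gens n" and a: "x i < x (Suc i)"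
  shows "rho n (tact i x) = rho n x + 1"
  using rho_L2[OF x] rho_L2[OF tact_Invol[OF x i]] L2_asc[OF x i a] by simp

lemma rho_desc:
  assumes x: "x \<in> Invol n" and i: "i \<in> gens n" and d: "x (Suc i) < x i"
  shows "rho n (tact i x) + 1 = rho n x"
  using rho_L2[OF x] rho_L2[OF tact_Invol[OF x i]] L2_desc[OF x i d] by simp

lemma rho_le:
  assumes x: "x \<in> Invol n" and i: "i \<in> gens n"
  shows "rho n (tact i x) \<le> rho n x + 1"
  using asc_or_desc[OF x i] rho_asc[OF x i] rho_desc[OF x i] by fastforce

lemma rho_up_asc:
  assumes x: "x \<in> Invol n" and i: "i \<in> gens n" and u: "rho n (tact i x) = rho n x + 1"
  shows "x i < x (Suc i)"
  using asc_or_desc[OF x i] rho_desc[OF x i] u by fastforce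

lemma rho_tacts_le:
  assumes "set ks \<subseteq> gens n" "x \<in> Invol n"
  shows "rho n (tacts ks x) \<le> rho n x + length ks"
  using assms
proof (induction "ks")
  case Nil then show ?case by (simp add: tacts_Nil)
next
  case (Cons i ks)
  then have ih: "rho n (tacts ks x) \<le> rho n x + length ks" and i: "i \<in> gens n" by auto
  have "tacts ks x \<in> Invol n" using tacts_bound Cons.prems by auto
  then have "rho n (tact i (tacts ks x)) \<le> rho n (tacts ks x) + 1" by (rule rho_le[OF _ i])
  then show ?case using ih by (simp add: tacts_Cons)
qed



lemma braid_core2:
  assumes inv: "\<And>p. x (x p) = p" and b: "a = Suc b"
    and a1: "x a < x (Suc a)"
    and a2: "tact a x b < tact a x (Suc b)"
    and a3: "tact b (tact a x) a < tact b (tact a x) (Suc a)"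
  shows "tact a (tact b (tact a x)) = tact b (tact a (tact b x))"
proof -
  define y1 where "y1 = tact a x"
  define y2 where "y2 = tact b y1"
  define z1 where "z1 = tact b x"
  define z2 where "z2 = tact a z1"
  have iy1: "\<And>p. y1 (y1 p) = p" unfolding y1_def by (rule tact_invol[OF inv])
  have iy2: "\<And>p. y2 (y2 p) = p" unfolding y2_def by (rule tact_invol[OF iy1])
  have iz1: "\<And>p. z1 (z1 p) = p" unfolding z1_def by (rule tact_invol[OF inv])
  have iz2: "\<And>p. z2 (z2 p) = p" unfolding z2_def by (rule tact_invol[OF iz1])
  have ey1: "y1 = sgen a \<circ> x \<circ> E a x" unfolding y1_def by (rule tact_comp[OF inv])
  have ez1: "z1 = sgen b \<circ> x \<circ> E b x" unfolding z1_def by (rule tact_comp[OF inv])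
  have ey2: "y2 = sgen b \<circ> y1 \<circ> E b y1" unfolding y2_def by (rule tact_comp[OF iy1])
  have ez2: "z2 = sgen a \<circ> z1 \<circ> E a z1" unfolding z2_def by (rule tact_comp[OF iz1])
  have ey3: "tact a y2 = sgen a \<circ> y2 \<circ> E a y2" by (rule tact_comp[OF iy2])
  have ez3: "tact b z2 = sgen b \<circ> z2 \<circ> E b z2" by (rule tact_comp[OF iz2])
  have A2: "y1 b < y1 (Suc b)" using a2 y1_def by simp
  have A3: "y2 a < y2 (Suc a)" using a3 y1_def y2_def by simp
  have vy1: "\<And>q. y1 q = sgen a (x (E a x q))" using ey1 by simp
  have vz1: "\<And>q. z1 q = sgen b (x (E b x q))" using ez1 by simp
  have vy2: "\<And>q. y2 q = sgen b (y1 (E b y1 q))" using ey2 by simp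
  have vz2: "\<And>q. z2 q = sgen a (z1 (E a z1 q))" using ez2 by simp
  have Eap: "\<And>i f q. E i f q = (if cnd i f then q else sgen i q)" by (simp add: E_def)
  have key: "E a x \<circ> E b y1 \<circ> E a y2 = E b x \<circ> E a z1 \<circ> E b z2"
  proof (rule ext)
    fix q
    have cx: "\<And>q. x q = b \<or> x q = Suc b \<or> x q = Suc (Suc b) \<or> (x q \<noteq> b \<and> x q \<noteq> Suc b \<and> x q \<noteq> Suc (Suc b))" by auto
    show "(E a x \<circ> E b y1 \<circ> E a y2) q = (E b x \<circ> E a z1 \<circ> E b z2) q"
      using A2 A3 a1 inv inv[of b] inv[of "Suc b"] inv[of "Suc (Suc b)"] cx[of b] cx[of "Suc b"] cx[of "Suc (Suc b)"]
      apply -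
      apply (elim disjE conjE)
      apply (simp_all add: Eap cnd_def sgen_apply vy1 vy2 vz1 vz2 b)
      done
  qed
  have L: "tact a y2 = (sgen a \<circ> sgen b \<circ> sgen a) \<circ> x \<circ> (E a x \<circ> E b y1 \<circ> E a y2)"
    by (rule ext) (simp add: ey3 vy2 vy1)
  have R: "tact b z2 = (sgen b \<circ> sgen a \<circ> sgen b) \<circ> x \<circ> (E b x \<circ> E a z1 \<circ> E b z2)"
    by (rule ext) (simp add: ez3 vz2 vz1)
  show ?thesis
    unfolding y1_def[symmetric] y2_def[symmetric] z1_def[symmetric] z2_def[symmetric] L R
    using braid_fun[of b a] key b by simp
qed


lemma sgen_far_comm:
  assumes "a > b + 1 \<or> b > a + 1"
  shows "sgen a \<circ> sgen b = sgen b \<circ> sgen a"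
  using assms by (auto simp: fun_eq_iff sgen_apply)

lemma cancel_l: "(sgen i \<circ> f = sgen i \<circ> g) = (f = g)"
  by (metis comp_assoc id_comp sgen_comp_sgen)
lemma cancel_r: "(f \<circ> sgen i = g \<circ> sgen i) = (f = g)"
  by (metis comp_assoc comp_id sgen_comp_sgen)

lemma cancel_lr: "(sgen i \<circ> f \<circ> sgen i = sgen i \<circ> g \<circ> sgen i) = (f = g)"
  using cancel_l cancel_r by (metis comp_assoc)

lemma comm_transfer:
  assumes ST: "sgen a \<circ> sgen b = sgen b \<circ> sgen a"
  shows "(sgen a \<circ> tact b w = tact b w \<circ> sgen a) = (sgen a \<circ> w = w \<circ> sgen a)"
proof -
  let ?S = "sgen a" and ?T = "sgen b"
  have k1: "(?S \<circ> (?T \<circ> w) = (?T \<circ> w) \<circ> ?S) = (?S \<circ> w = w \<circ> ?S)"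
  proof -
    have "?S \<circ> (?T \<circ> w) = ?T \<circ> (?S \<circ> w)" by (metis ST comp_assoc)
    moreover have "(?T \<circ> w) \<circ> ?S = ?T \<circ> (w \<circ> ?S)" by (simp add: comp_assoc)
    ultimately show ?thesis by (simp add: cancel_l)
  qed
  have k2: "(?S \<circ> (?T \<circ> w \<circ> ?T) = (?T \<circ> w \<circ> ?T) \<circ> ?S) = (?S \<circ> w = w \<circ> ?S)"
  proof -
    have "?S \<circ> (?T \<circ> w \<circ> ?T) = ?T \<circ> (?S \<circ> w) \<circ> ?T" by (metis ST comp_assoc)
    moreover have "(?T \<circ> w \<circ> ?T) \<circ> ?S = ?T \<circ> (w \<circ> ?S) \<circ> ?T" by (metis ST comp_assoc)
    ultimately show ?thesis using cancel_lr[of b "sgen a \<circ> w" "w \<circ> sgen a"] by simp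
  qed
  show ?thesis
  proof (cases "sgen b \<circ> w = w \<circ> sgen b")
    case True show ?thesis unfolding tact_def if_P[OF True] by (rule k1)
  next
    case False show ?thesis unfolding tact_def if_not_P[OF False] by (rule k2)
  qed
qed

lemma tact_comm_far:
  assumes far: "a > b + 1 \<or> b > a + 1"
  shows "tact a (tact b w) = tact b (tact a w)"
proof -
  have ST: "sgen a \<circ> sgen b = sgen b \<circ> sgen a" by (rule sgen_far_comm[OF far])
  have TS: "sgen b \<circ> sgen a = sgen a \<circ> sgen b" using ST by simp
  note c1 = comm_transfer[OF ST, of w] and c2 = comm_transfer[OF TS, of w]
  have AB: "sgen a \<circ> (sgen b \<circ> f) = sgen b \<circ> (sgen a \<circ> f)" for f by (metis ST comp_assoc)
  show ?thesis
  proof (cases "sgen a \<circ> w = w \<circ> sgen a"; cases "sgen b \<circ> w = w \<circ> sgen b")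
    assume h1: "sgen a \<circ> w = w \<circ> sgen a" and h2: "sgen b \<circ> w = w \<circ> sgen b"
    have "tact b w = sgen b \<circ> w" "tact a w = sgen a \<circ> w" using h1 h2 by (simp_all add: tact_def)
    moreover have "tact a (sgen b \<circ> w) = sgen a \<circ> (sgen b \<circ> w)" using c1 h1 h2 by (simp add: tact_def)
    moreover have "tact b (sgen a \<circ> w) = sgen b \<circ> (sgen a \<circ> w)" using c2 h1 h2 by (simp add: tact_def)
    ultimately show ?thesis using AB by simp
  next
    assume h1: "sgen a \<circ> w = w \<circ> sgen a" and h2: "sgen b \<circ> w \<noteq> w \<circ> sgen b"
    have "tact b w = sgen b \<circ> w \<circ> sgen b" "tact a w = sgen a \<circ> w" using h1 h2 by (simp_all add: tact_def)
    moreover have "tact a (sgen b \<circ> w \<circ> sgen b) = sgen a \<circ> (sgen b \<circ> w \<circ> sgen b)" using c1 h1 h2 by (simp add: tact_def)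
    moreover have "tact b (sgen a \<circ> w) = sgen b \<circ> (sgen a \<circ> w) \<circ> sgen b" using c2 h1 h2 by (simp add: tact_def)
    ultimately show ?thesis using AB by (simp add: comp_assoc)
  next
    assume h1: "sgen a \<circ> w \<noteq> w \<circ> sgen a" and h2: "sgen b \<circ> w = w \<circ> sgen b"
    have "tact b w = sgen b \<circ> w" "tact a w = sgen a \<circ> w \<circ> sgen a" using h1 h2 by (simp_all add: tact_def)
    moreover have "tact a (sgen b \<circ> w) = sgen a \<circ> (sgen b \<circ> w) \<circ> sgen a" using c1 h1 h2 by (simp add: tact_def)
    moreover have "tact b (sgen a \<circ> w \<circ> sgen a) = sgen b \<circ> (sgen a \<circ> w \<circ> sgen a)" using c2 h1 h2 by (simp add: tact_def)
    ultimately show ?thesis using AB by (simp add: comp_assoc)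
  next
    assume h1: "sgen a \<circ> w \<noteq> w \<circ> sgen a" and h2: "sgen b \<circ> w \<noteq> w \<circ> sgen b"
    have "tact b w = sgen b \<circ> w \<circ> sgen b" "tact a w = sgen a \<circ> w \<circ> sgen a" using h1 h2 by (simp_all add: tact_def)
    moreover have "tact a (sgen b \<circ> w \<circ> sgen b) = sgen a \<circ> (sgen b \<circ> w \<circ> sgen b) \<circ> sgen a" using c1 h1 h2 by (simp add: tact_def)
    moreover have "tact b (sgen a \<circ> w \<circ> sgen a) = sgen b \<circ> (sgen a \<circ> w \<circ> sgen a) \<circ> sgen b" using c2 h1 h2 by (simp add: tact_def)
    moreover have "sgen a \<circ> (sgen b \<circ> w \<circ> sgen b) \<circ> sgen a = sgen b \<circ> (sgen a \<circ> w \<circ> sgen a) \<circ> sgen b"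
      by (metis ST comp_assoc)
    ultimately show ?thesis by simp
  qed
qed

lemma tact_id: "tact j id = sgen j" by (simp add: tact_def)

lemma rho_id: "rho n id = 0" using rho_L2[OF id_Invol] L2_id by simp

lemma rho_sgen: assumes j: "j \<in> gens n" shows "rho n (sgen j) = 1" "sgen j \<in> Invol n"
proof -
  show "rho n (sgen j) = 1" using rho_asc[OF id_Invol j] rho_id tact_id by simp
  show "sgen j \<in> Invol n" using tact_Invol[OF id_Invol j] tact_id by simp
qed

lemma adj_tact:
  assumes adj: "j = a + 1 \<or> a = j + 1"
  shows "tact a (sgen j) = sgen a \<circ> sgen j \<circ> sgen a"
proof -
  have "sgen a \<circ> sgen j \<noteq> sgen j \<circ> sgen a"
  proof
    assume h: "sgen a \<circ> sgen j = sgen j \<circ> sgen a"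
    have "sgen a (sgen j a) = sgen j (sgen a a)" "sgen a (sgen j j) = sgen j (sgen a j)"
      using fun_cong[OF h, of a] fun_cong[OF h, of j] by simp_all
    then show False using adj by (auto simp: sgen_apply)
  qed
  then show ?thesis by (simp add: tact_def)
qed

theorem lemma2p13:
  fixes n :: nat and w :: "nat \<Rightarrow> nat" and pre :: "nat list" and a b j :: nat
  shows
  "(reduced n (pre @ [a, b]) w \<and> (a > b + 1 \<or> b > a + 1) \<longrightarrow>
      reduced n (pre @ [b, a]) w \<and> tacts (pre @ [a, b]) w = tacts (pre @ [b, a]) w)
   \<and> (reduced n (pre @ [a, b, a]) w \<and> (b = a + 1 \<or> a = b + 1) \<longrightarrow>
      reduced n (pre @ [b, a, b]) w \<and> tacts (pre @ [a, b, a]) w = tacts (pre @ [b, a, b]) w)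
   \<and> (reduced n (pre @ [a]) w \<and> j \<in> gens n \<and> (j = a + 1 \<or> a = j + 1) \<and> w = sgen j \<longrightarrow>
      reduced n (pre @ [j]) (sgen a) \<and> tacts (pre @ [a]) (sgen j) = tacts (pre @ [j]) (sgen a))"
proof (intro conjI impI)
  assume h: "reduced n (pre @ [a, b]) w \<and> (a > b + 1 \<or> b > a + 1)"
  have eq: "tacts (pre @ [a, b]) w = tacts (pre @ [b, a]) w"
    using tact_comm_far[of b a w] h by (simp add: tacts_append tacts_Cons tacts_Nil)
  show "tacts (pre @ [a, b]) w = tacts (pre @ [b, a]) w" by (rule eq)
  show "reduced n (pre @ [b, a]) w" using h eq unfolding reduced_def by auto
next
  assume h: "reduced n (pre @ [a, b, a]) w \<and> (b = a + 1 \<or> a = b + 1)"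
  have w: "w \<in> Invol n" and g: "set pre \<subseteq> gens n" "a \<in> gens n" "b \<in> gens n"
    and r: "rho n (tacts (pre @ [a, b, a]) w) = rho n w + length pre + 3"
    using h by (auto simp: reduced_def)
  define y1 where "y1 = tact a w"
  define y2 where "y2 = tact b y1"
  define y3 where "y3 = tact a y2"
  have i1: "y1 \<in> Invol n" unfolding y1_def by (rule tact_Invol[OF w g(2)])
  have i2: "y2 \<in> Invol n" unfolding y2_def by (rule tact_Invol[OF i1 g(3)])
  have i3: "y3 \<in> Invol n" unfolding y3_def by (rule tact_Invol[OF i2 g(2)])
  have t: "tacts (pre @ [a, b, a]) w = tacts pre y3" by (simp add: tacts_append tacts_Cons tacts_Nil y1_def y2_def y3_def)
  have l0: "rho n (tacts pre y3) \<le> rho n y3 + length pre" by (rule rho_tacts_le[OF g(1) i3])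
  have l3: "rho n y3 \<le> rho n y2 + 1" unfolding y3_def by (rule rho_le[OF i2 g(2)])
  have l2: "rho n y2 \<le> rho n y1 + 1" unfolding y2_def by (rule rho_le[OF i1 g(3)])
  have l1: "rho n y1 \<le> rho n w + 1" unfolding y1_def by (rule rho_le[OF w g(2)])
  have r': "rho n (tacts pre y3) = rho n w + length pre + 3" using r t by simp
  have e1: "rho n y1 = rho n w + 1" using r' l0 l1 l2 l3 by linarith
  have e2: "rho n y2 = rho n y1 + 1" using r' l0 l1 l2 l3 by linarith
  have e3: "rho n y3 = rho n y2 + 1" using r' l0 l1 l2 l3 by linarith
  have a1: "w a < w (Suc a)" using rho_up_asc[OF w g(2)] e1 y1_def by simp
  have a2: "y1 b < y1 (Suc b)" using rho_up_asc[OF i1 g(3)] e2 y2_def by simp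
  have a3: "y2 a < y2 (Suc a)" using rho_up_asc[OF i2 g(2)] e3 y3_def by simp
  have inv: "\<And>p. w (w p) = p" by (rule Invol_D(2)[OF w])
  have core: "tact a (tact b (tact a w)) = tact b (tact a (tact b w))"
  proof (cases "b = Suc a")
    case True
    show ?thesis by (rule braid_core[OF inv True a1]) (use a2 a3 y1_def y2_def in simp_all)
  next
    case False
    then have "a = Suc b" using h by simp
    then show ?thesis by (intro braid_core2[OF inv _ a1]) (use a2 a3 y1_def y2_def in simp_all)
  qed
  have eq: "tacts (pre @ [a, b, a]) w = tacts (pre @ [b, a, b]) w"
    using core by (simp add: tacts_append tacts_Cons tacts_Nil)
  show "tacts (pre @ [a, b, a]) w = tacts (pre @ [b, a, b]) w" by (rule eq)
  show "reduced n (pre @ [b, a, b]) w" using h eq unfolding reduced_def by auto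
next
  assume h: "reduced n (pre @ [a]) w \<and> j \<in> gens n \<and> (j = a + 1 \<or> a = j + 1) \<and> w = sgen j"
  have g: "a \<in> gens n" "j \<in> gens n" "set pre \<subseteq> gens n" using h by (auto simp: reduced_def)
  have adj1: "j = a + 1 \<or> a = j + 1" and adj2: "a = j + 1 \<or> j = a + 1" using h by auto
  have eq0: "tact a (sgen j) = tact j (sgen a)"
    unfolding adj_tact[OF adj1] adj_tact[OF adj2] using braid_fun[of j a] adj1 by auto
  have eq: "tacts (pre @ [a]) (sgen j) = tacts (pre @ [j]) (sgen a)"
    using eq0 by (simp add: tacts_append tacts_Cons tacts_Nil)
  show "tacts (pre @ [a]) (sgen j) = tacts (pre @ [j]) (sgen a)" by (rule eq)
  show "reduced n (pre @ [j]) (sgen a)"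
    using h eq rho_sgen[OF g(1)] rho_sgen[OF g(2)] g unfolding reduced_def by auto
qed


end
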